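(* Let $0<r_j<\infty$ and $0<s_j<\infty$ for $j=1,\dots,n$, let $\rho=\otimes_{j=1}^n\gamma(r_j)$ and $\sigma=\otimes_{j=1}^n\gamma(s_j)$. Let $\alpha>1$ and let $V_{\sigma(\alpha-1)}$ and $V_{\rho(\alpha)}$ denote the covariance matrices of the gaussian states $\sigma^{\alpha-1}/\operatorname{tr}\sigma^{\alpha-1}$ and $\rho^\alpha/\operatorname{tr}\rho^\alpha$ respectively. Then $$V_{\sigma(\alpha-1)}>V_{\rho(\alpha)}\iff\alpha<\min\left\{\frac{s_j}{s_j-r_j}: j\in\{1,\dots,n\}\text{ such that } r_j<s_j\right\},$$ where the minimum of the empty set is $+\infty$.
   Context: One-mode Fock space: $\ell^2(\mathbb{Z}_{\ge 0})$ with orthonormal particle basis $\{|k\rangle\}$; $n$-mode space is the $n$-fold tensor product. For $0<s<\infty$, $\gamma(s)=(1-e^{-s})\sum_{k\ge0}e^{-ks}|k\rangle\langle k|$. For $\beta>0$, $\gamma(\mathbf{s})^\beta/\operatorname{tr}\gamma(\mathbf{s})^\beta=\otimes_j\gamma(\beta s_j)$, and the covariance matrix of the gaussian state $\otimes_j\gamma(t_j)$ is the $2n\times 2n$ matrix $\frac12\operatorname{diag}(\coth\frac{t_1}{2},\dots,\coth\frac{t_n}{2})\otimes I_2$. For real symmetric matrices, $A>B$ means $A-B$ is positive definite. *)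

theory Defs
  imports "HOL-Analysis.Analysis"
begin

definition coth :: "real \<Rightarrow> real" where
  "coth x = cosh x / sinh x"

definition diag_mat :: "('n::finite \<Rightarrow> real) \<Rightarrow> real^'n^'n" where
  "diag_mat d = (\<chi> i j. if i = j then d i else 0)"

definition kron :: "real^'n^'n \<Rightarrow> real^'k^'k \<Rightarrow> real^('n \<times> 'k)^('n \<times> 'k)" where
  "kron A B = (\<chi> p q. (A $ fst p $ fst q) * (B $ snd p $ snd q))"

(* covariance matrix of the n-mode gaussian state \<otimes>_j \<gamma>(t_j):
   (1/2) diag(coth(t_1/2),...,coth(t_n/2)) \<otimes> I_2, a 2n x 2n matrix *)
definition cov_gamma :: "('n::finite \<Rightarrow> real) \<Rightarrow> real^('n \<times> 2)^('n \<times> 2)" where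
  "cov_gamma t = kron (diag_mat (\<lambda>j. (1/2) * coth (t j / 2))) (mat 1 :: real^2^2)"

definition pos_def :: "real^'m^'m \<Rightarrow> bool" where
  "pos_def M \<longleftrightarrow> (\<forall>x. x \<noteq> 0 \<longrightarrow> x \<bullet> (M *v x) > 0)"

definition mat_gt :: "real^'m^'m \<Rightarrow> real^'m^'m \<Rightarrow> bool" where
  "mat_gt A B \<longleftrightarrow> pos_def (A - B)"

end

theory Submission
  imports Defs
begin

lemma coth_alt: "x > 0 \<Longrightarrow> coth x = 1 + 2 / (exp (2*x) - 1)"
proof -
  assume x: "x > 0"
  have e: "exp (2*x) > 1" using x by simp
  have ex: "exp (2*x) = exp x * exp x" by (metis exp_add mult_2)
  have "exp x > 0" by simp
  have s: "sinh x = (exp x - exp (-x)) / 2" by (simp add: sinh_def)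
  have c: "cosh x = (exp x + exp (-x)) / 2" by (simp add: cosh_def)
  have "exp x - exp (-x) \<noteq> 0" using x by (simp add: exp_minus_inverse) 
  then show ?thesis using e unfolding coth_def s c ex
    by (simp add: exp_minus field_simps) 
qed

lemma two_div_less: "(u::real) > 0 \<Longrightarrow> v > 0 \<Longrightarrow> 2 / v < 2 / u \<longleftrightarrow> u < v"
  by (auto simp: field_simps)

lemma coth_less_iff: "a > 0 \<Longrightarrow> b > 0 \<Longrightarrow> coth b < coth a \<longleftrightarrow> a < b"
proof -
  assume a: "a > 0" and b: "b > 0"
  have ea: "exp (2*a) - 1 > 0" "exp (2*b) - 1 > 0" using a b by auto
  have "coth b < coth a \<longleftrightarrow> 2 / (exp (2*b) - 1) < 2 / (exp (2*a) - 1)"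
    using a b by (simp add: coth_alt)
  also have "\<dots> \<longleftrightarrow> exp (2*a) - 1 < exp (2*b) - 1"
    using ea by (rule two_div_less)
  also have "\<dots> \<longleftrightarrow> a < b" by simp
  finally show ?thesis .
qed

lemma quad_form:
  fixes d :: "'n::finite \<Rightarrow> real" and x :: "real^('n \<times> 2)"
  shows "x \<bullet> (kron (diag_mat d) (mat 1 :: real^2^2) *v x) = (\<Sum>p\<in>UNIV. d (fst p) * (x $ p)^2)"
proof -
  have e: "(if fst p = fst q then d (fst p) else 0) * (if snd p = snd q then 1 else 0) * x $ q
     = (if p = q then d (fst p) * x $ p else 0)" for p q
    by (cases p; cases q; auto)
  have "(kron (diag_mat d) (mat 1 :: real^2^2) *v x) $ p = d (fst p) * x $ p" for p
    unfolding matrix_vector_mult_def kron_def diag_mat_def mat_def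
    by (simp add: e)
  then show ?thesis by (simp add: inner_vec_def power2_eq_square mult_ac)
qed

lemma pos_def_kron:
  fixes d :: "'n::finite \<Rightarrow> real"
  shows "pos_def (kron (diag_mat d) (mat 1 :: real^2^2)) \<longleftrightarrow> (\<forall>j. d j > 0)"
proof
  assume h: "pos_def (kron (diag_mat d) (mat 1 :: real^2^2))"
  show "\<forall>j. d j > 0"
  proof
    fix j
    define x where "x = (axis (j, 1::2) (1::real) :: real^('n \<times> 2))"
    have "x \<noteq> 0" by (simp add: x_def axis_eq_0_iff)
    then have "0 < x \<bullet> (kron (diag_mat d) (mat 1 :: real^2^2) *v x)" using h pos_def_def by blast
    also have "\<dots> = (\<Sum>p\<in>UNIV. d (fst p) * (x $ p)^2)" by (rule quad_form)
    also have "\<dots> = d j"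
    proof -
      have "d (fst p) * (x $ p)^2 = (if p = (j,1) then d j else 0)" for p
        by (auto simp: x_def axis_def)
      then show ?thesis by simp
    qed
    finally show "d j > 0" .
  qed
next
  assume h: "\<forall>j. d j > 0"
  show "pos_def (kron (diag_mat d) (mat 1 :: real^2^2))"
    unfolding pos_def_def
  proof (intro allI impI)
    fix x :: "real^('n \<times> 2)"
    assume "x \<noteq> 0"
    then obtain p where p: "x $ p \<noteq> 0" by (metis vec_eq_iff zero_index)
    have "0 < d (fst p) * (x $ p)^2" using h p by simp
    also have "\<dots> \<le> (\<Sum>q\<in>UNIV. d (fst q) * (x $ q)^2)"
      by (rule member_le_sum) (use h in \<open>auto simp: less_imp_le\<close>)
    finally show "0 < x \<bullet> (kron (diag_mat d) (mat 1 :: real^2^2) *v x)"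
      by (simp add: quad_form)
  qed
qed

lemma cov_diff: "cov_gamma a - cov_gamma b
   = kron (diag_mat (\<lambda>j. (1/2) * coth (a j / 2) - (1/2) * coth (b j / 2))) (mat 1 :: real^2^2)"
  unfolding cov_gamma_def kron_def diag_mat_def
  by (simp add: vec_eq_iff mat_def left_diff_distrib)

lemma ereal_less_INF_finite:
  fixes f :: "'a \<Rightarrow> real"
  assumes "finite S"
  shows "ereal a < (INF j \<in> S. ereal (f j)) \<longleftrightarrow> (\<forall>j\<in>S. a < f j)"
proof (cases "S = {}")
  case True then show ?thesis by (simp add: top_ereal_def)
next
  case False
  have "(INF j \<in> S. ereal (f j)) = Min ((\<lambda>j. ereal (f j)) ` S)"
    using assms False by (simp add: cInf_eq_Min)
  then show ?thesis using assms False by simp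
qed

theorem lemma3p5:
  fixes r s :: "'n::finite \<Rightarrow> real" and \<alpha> :: real
  assumes "\<And>j. 0 < r j" and "\<And>j. 0 < s j" and "1 < \<alpha>"
  shows "mat_gt (cov_gamma (\<lambda>j. (\<alpha> - 1) * s j)) (cov_gamma (\<lambda>j. \<alpha> * r j))
     \<longleftrightarrow> ereal \<alpha> < (INF j \<in> {j. r j < s j}. ereal (s j / (s j - r j)))"
proof -
  have step: "(1/2) * coth (\<alpha> * r j / 2) < (1/2) * coth ((\<alpha> - 1) * s j / 2)
      \<longleftrightarrow> (r j < s j \<longrightarrow> \<alpha> < s j / (s j - r j))" for j
  proof -
    have p1: "(\<alpha> - 1) * s j / 2 > 0" using assms by simp
    have p2: "\<alpha> * r j / 2 > 0" using assms by simp
    have "(1/2) * coth (\<alpha> * r j / 2) < (1/2) * coth ((\<alpha> - 1) * s j / 2)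
        \<longleftrightarrow> (\<alpha> - 1) * s j < \<alpha> * r j"
      using coth_less_iff[OF p1 p2] by simp
    also have "\<dots> \<longleftrightarrow> (r j < s j \<longrightarrow> \<alpha> < s j / (s j - r j))"
    proof (cases "r j < s j")
      case True
      then show ?thesis by (simp add: less_divide_eq algebra_simps)
    next
      case False
      have "(\<alpha> - 1) * s j < \<alpha> * s j" using assms by (simp add: algebra_simps)
      also have "\<alpha> * s j \<le> \<alpha> * r j" using False assms(3) by simp
      finally show ?thesis using False by simp
    qed
    finally show ?thesis .
  qed
  have "mat_gt (cov_gamma (\<lambda>j. (\<alpha> - 1) * s j)) (cov_gamma (\<lambda>j. \<alpha> * r j))
      \<longleftrightarrow> (\<forall>j. (1/2) * coth (\<alpha> * r j / 2) < (1/2) * coth ((\<alpha> - 1) * s j / 2))"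
    unfolding mat_gt_def cov_diff pos_def_kron by simp
  also have "\<dots> \<longleftrightarrow> (\<forall>j\<in>{j. r j < s j}. \<alpha> < s j / (s j - r j))"
    unfolding step by auto
  also have "\<dots> \<longleftrightarrow> ereal \<alpha> < (INF j \<in> {j. r j < s j}. ereal (s j / (s j - r j)))"
    by (rule ereal_less_INF_finite[symmetric]) simp
  finally show ?thesis .
qed

end
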